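(* Let $\alpha\in(0,1/2)$ and $H\in C^{2\alpha}([0,1])\cap D_\alpha$. For $M\ge2$, $y_l=l/M$, $\delta=1/M$, let $H_k:=\frac1M\sum_{l=1}^{M-1}H(y_l)e_k(y_l)$ and $H^M:=\sum_{k=1}^{M-1}H_ke_k$. Then there is a constant $C>0$ (independent of $H$ and $M$) such that $$\|H-H^M\|^2_{L^2}\le CK^2\delta^{\frac{8\alpha^2}{4\alpha+1}},\qquad K:=\max\big(\|H\|_\infty,\|H\|_{C^{2\alpha}},\|H\|_{D_\alpha}\big).$$
   Context: $e_k(y)=\sqrt2\sin(\pi ky)$, $\lambda_k=\vartheta\pi^2k^2$ for a fixed $\vartheta>0$; $D_\alpha=\{u\in L^2((0,1)):\sum_k\lambda_k^{2\alpha}\langle u,e_k\rangle^2<\infty\}$ with norm $\|u\|_{D_\alpha}=(\sum_k\lambda_k^{2\alpha}\langle u,e_k\rangle_{L^2}^2)^{1/2}$; $C^{2\alpha}([0,1])$ the Hölder space with norm $\|u\|_\infty+\sup_{x\ne y}|u(x)-u(y)|/|x-y|^{2\alpha}$; $\|\cdot\|_{L^2}$ the norm of $L^2((0,1))$. *)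

theory Defs
  imports "HOL-Analysis.Analysis"
begin

definition ebasis :: "nat \<Rightarrow> real \<Rightarrow> real" where
  "ebasis k y = sqrt 2 * sin (pi * real k * y)"

definition lam :: "real \<Rightarrow> nat \<Rightarrow> real" where
  "lam \<theta> k = \<theta> * pi\<^sup>2 * (real k)\<^sup>2"

definition L2_inner :: "(real \<Rightarrow> real) \<Rightarrow> (real \<Rightarrow> real) \<Rightarrow> real" where
  "L2_inner u v = integral {0..1} (\<lambda>y. u y * v y)"

definition L2_norm :: "(real \<Rightarrow> real) \<Rightarrow> real" where
  "L2_norm u = sqrt (integral {0..1} (\<lambda>y. (u y)\<^sup>2))"

definition sup_norm :: "(real \<Rightarrow> real) \<Rightarrow> real" where
  "sup_norm u = (SUP x\<in>{0..1}. \<bar>u x\<bar>)"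

definition holder_space :: "real \<Rightarrow> (real \<Rightarrow> real) set" where
  "holder_space \<alpha> = {u. \<exists>L. \<forall>x\<in>{0..1}. \<forall>y\<in>{0..1}.
      \<bar>u x - u y\<bar> \<le> L * \<bar>x - y\<bar> powr (2 * \<alpha>)}"

definition holder_norm :: "real \<Rightarrow> (real \<Rightarrow> real) \<Rightarrow> real" where
  "holder_norm \<alpha> u = sup_norm u +
     (SUP p\<in>{(x, y). x \<in> {0..1} \<and> y \<in> {0..1} \<and> x \<noteq> y}.
        \<bar>u (fst p) - u (snd p)\<bar> / \<bar>fst p - snd p\<bar> powr (2 * \<alpha>))"

definition D_space :: "real \<Rightarrow> real \<Rightarrow> (real \<Rightarrow> real) set" where
  "D_space \<theta> \<alpha> = {u. (\<lambda>y. (u y)\<^sup>2) integrable_on {0..1} \<and>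
      summable (\<lambda>k. lam \<theta> (Suc k) powr (2 * \<alpha>) * (L2_inner u (ebasis (Suc k)))\<^sup>2)}"

definition D_norm :: "real \<Rightarrow> real \<Rightarrow> (real \<Rightarrow> real) \<Rightarrow> real" where
  "D_norm \<theta> \<alpha> u = sqrt (\<Sum>k. lam \<theta> (Suc k) powr (2 * \<alpha>) * (L2_inner u (ebasis (Suc k)))\<^sup>2)"

definition disc_coeff :: "nat \<Rightarrow> (real \<Rightarrow> real) \<Rightarrow> nat \<Rightarrow> real" where
  "disc_coeff M H k = (1 / real M) * (\<Sum>l=1..M-1. H (real l / real M) * ebasis k (real l / real M))"

definition disc_interp :: "nat \<Rightarrow> (real \<Rightarrow> real) \<Rightarrow> real \<Rightarrow> real" where
  "disc_interp M H y = (\<Sum>k=1..M-1. disc_coeff M H k * ebasis k y)"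

end

theory Submission
  imports Defs "HOL-Analysis.Analysis"
begin

lemma sin_lower: fixes y::real assumes "0 \<le> y" "y \<le> pi/2" shows "y/4 \<le> sin y"
proof (cases "y \<le> pi/3")
  case True
  have "sin 0 - 0/2 \<le> sin y - y/2"
  proof (rule DERIV_nonneg_imp_nondecreasing[of 0 y "\<lambda>y. sin y - y/2"])
    show "0 \<le> y" by fact
    fix x assume x: "0 \<le> x" "x \<le> y"
    show "\<exists>d. ((\<lambda>y. sin y - y/2) has_real_derivative d) (at x) \<and> 0 \<le> d"
    proof (intro exI conjI)
      show "((\<lambda>y. sin y - y/2) has_real_derivative (cos x - 1/2)) (at x)"
        by (auto intro!: derivative_eq_intros)
      have "cos (pi/3) \<le> cos x" using x True by (subst cos_mono_le_eq) auto
      then show "0 \<le> cos x - 1/2" by (simp add: cos_60)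
    qed
  qed
  then show ?thesis using assms by simp
next
  case False
  have "sin (pi/6) \<le> sin y" using False assms by (subst sin_mono_le_eq) auto
  moreover have "y/4 \<le> 1/2" using assms pi_less_4 by simp
  moreover have "sin (pi/6) = 1/2" by (rule sin_30)
  ultimately show ?thesis by simp
qed

lemma one_minus_cos_lower: fixes s::real assumes "\<bar>s\<bar> \<le> 1" shows "s\<^sup>2/4 \<le> 1 - cos (pi * s)"
proof -
  define y where "y = pi * \<bar>s\<bar> / 2"
  have y: "0 \<le> y" "y \<le> pi/2" using assms by (auto simp: y_def)
  have c: "cos (pi * s) = cos (2 * y)" unfolding y_def
    by (cases "s \<ge> 0") (simp_all add: abs_if)
  have "1 - cos (pi * s) = 2 * (sin y)\<^sup>2" unfolding c cos_double_sin by simp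
  moreover have "y/4 \<le> sin y" using sin_lower y by blast
  hence "(y/4)\<^sup>2 \<le> (sin y)\<^sup>2" using y by (intro power_mono) auto
  moreover have "(y/4)\<^sup>2 = pi\<^sup>2 * s\<^sup>2/64" unfolding y_def by (simp add: power2_eq_square field_simps abs_mult_self_eq)
  moreover have "9 \<le> pi\<^sup>2" using power_mono[of 3 pi 2] pi_gt3 by simp
  moreover have "9 * s\<^sup>2 \<le> pi\<^sup>2 * s\<^sup>2" by (rule mult_right_mono) (use calculation in auto)
  ultimately show ?thesis using zero_le_power2[of s] by linarith
qed


definition Fej :: "nat \<Rightarrow> real \<Rightarrow> real" where
  "Fej M t = 1 + 2 * (\<Sum>k=1..M-1. (1 - real k / real M) * cos (real k * t))"

lemma dir_id: "(1 - cos t) * (1 + 2 * (\<Sum>k=1..n. cos (real k * t))) = cos (real n * t) - cos (real (Suc n) * t)"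
proof (induction n)
  case 0 then show ?case by simp
next
  case (Suc n)
  have e: "2 * cos t * cos (real (Suc n) * t) = cos (real (Suc (Suc n)) * t) + cos (real n * t)"
  proof -
    have a: "real (Suc (Suc n)) * t = real (Suc n) * t + t" by (simp add: algebra_simps)
    have b: "real n * t = real (Suc n) * t - t" by (simp add: algebra_simps)
    show ?thesis unfolding a b cos_add cos_diff by (simp add: algebra_simps)
  qed
  have "(1 - cos t) * (1 + 2 * (\<Sum>k=1..Suc n. cos (real k * t))) =
      (1 - cos t) * (1 + 2 * (\<Sum>k=1..n. cos (real k * t))) + 2 * (1 - cos t) * cos (real (Suc n) * t)"
    by (simp add: algebra_simps)
  also have "\<dots> = cos (real (Suc n) * t) - cos (real (Suc (Suc n)) * t)"
    unfolding Suc.IH using e by (simp add: algebra_simps)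
  finally show ?case .
qed

definition SF :: "nat \<Rightarrow> real \<Rightarrow> real" where
  "SF n t = real n + 2 * (\<Sum>k=1..n. (real n - real k) * cos (real k * t))"

lemma SF_id: "(1 - cos t) * SF n t = 1 - cos (real n * t)"
proof (induction n)
  case 0 then show ?case by (simp add: SF_def)
next
  case (Suc n)
  have "SF (Suc n) t = SF n t + (1 + 2 * (\<Sum>k=1..n. cos (real k * t)))"
  proof -
    have "(\<Sum>k=1..Suc n. (real (Suc n) - real k) * cos (real k * t)) =
        (\<Sum>k=1..n. (real (Suc n) - real k) * cos (real k * t))" by simp
    also have "\<dots> = (\<Sum>k=1..n. (real n - real k) * cos (real k * t)) + (\<Sum>k=1..n. cos (real k * t))"
      by (simp add: sum.distrib[symmetric] algebra_simps)
    finally show ?thesis unfolding SF_def by simp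
  qed
  then have "(1 - cos t) * SF (Suc n) t = (1 - cos t) * SF n t + (1 - cos t) * (1 + 2 * (\<Sum>k=1..n. cos (real k * t)))"
    by (simp add: algebra_simps)
  also have "\<dots> = 1 - cos (real (Suc n) * t)" unfolding Suc.IH dir_id by simp
  finally show ?case .
qed

lemma Fej_SF: assumes "M \<ge> 1" shows "real M * Fej M t = SF M t"
proof -
  have s: "(\<Sum>k=1..M. (real M - real k) * cos (real k * t)) = (\<Sum>k=1..M-1. (real M - real k) * cos (real k * t))"
  proof -
    obtain m where m: "M = Suc m" using assms by (cases M) auto
    show ?thesis unfolding m by simp
  qed
  have Mp: "real M > 0" using assms by simp
  have c: "real M * ((1 - real k / real M) * cos (real k * t)) = (real M - real k) * cos (real k * t)" for k
    using Mp by (simp add: field_simps)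
  define S where "S = (\<Sum>k=1..M-1. (1 - real k / real M) * cos (real k * t))"
  have e1: "real M * Fej M t = real M + 2 * (real M * S)"
    unfolding Fej_def S_def[symmetric] by (simp add: algebra_simps)
  have e2: "real M * S = (\<Sum>k=1..M-1. (real M - real k) * cos (real k * t))"
    unfolding S_def sum_distrib_left c ..
  show ?thesis unfolding e1 e2 SF_def s ..
qed

lemma Fej_closed: assumes "M \<ge> 1" shows "real M * Fej M t * (1 - cos t) = 1 - cos (real M * t)"
  using SF_id[of t M] Fej_SF[OF assms, of t] by (simp add: algebra_simps)

lemma Fej_nonneg: assumes "M \<ge> 1" shows "0 \<le> Fej M t"
proof (cases "cos t = 1")
  case True
  then have "\<exists>n::int. t = n * 2 * pi" by (simp only: cos_one_2pi_int)
  then obtain n :: int where n: "t = real_of_int n * 2 * pi" by blast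
  have "cos (real k * t) = 1" for k
  proof -
    have e: "real k * t = (2 * pi) * of_int (int k * n)" using n by simp
    show ?thesis unfolding e by (rule cos_int_2pin)
  qed
  then have "0 \<le> (\<Sum>k=1..M-1. (1 - real k / real M) * cos (real k * t))"
    by (intro sum_nonneg) (use assms in \<open>auto simp: field_simps\<close>)
  then show ?thesis unfolding Fej_def by simp
next
  case False
  then have p: "1 - cos t > 0" using cos_le_one[of t] by linarith
  have "0 \<le> 1 - cos (real M * t)" using cos_le_one by simp
  then have "0 \<le> real M * Fej M t * (1 - cos t)" using Fej_closed[OF assms] by simp
  then have "0 \<le> real M * Fej M t" using p by (simp add: zero_le_mult_iff)
  then show ?thesis using assms by (simp add: zero_le_mult_iff)
qed

lemma Fej_le: assumes "M \<ge> 1" "0 < \<bar>s\<bar>" "\<bar>s\<bar> \<le> 1" shows "Fej M (pi * s) \<le> 8 / (real M * s\<^sup>2)"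
proof -
  have c: "s\<^sup>2/4 \<le> 1 - cos (pi * s)" using one_minus_cos_lower assms by blast
  have sp: "s\<^sup>2 > 0" using assms by simp
  have Mp: "real M > 0" using assms by simp
  have "real M * Fej M (pi * s) * (1 - cos (pi * s)) \<le> 2" using Fej_closed[OF assms(1)] cos_ge_minus_one
    by (smt (verit))
  moreover have "real M * Fej M (pi * s) * (s\<^sup>2/4) \<le> real M * Fej M (pi * s) * (1 - cos (pi * s))"
    using c Fej_nonneg[OF assms(1)] Mp by (intro mult_left_mono) auto
  ultimately have "real M * Fej M (pi * s) * s\<^sup>2 \<le> 8" by simp
  then show ?thesis using sp Mp by (simp add: field_simps)
qed

lemma Fej_even: "Fej M (- t) = Fej M t" by (simp add: Fej_def)

lemma Fej_refl: "Fej M (pi * (2 - s)) = Fej M (pi * s)"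
proof -
  have "cos (real k * (pi * (2 - s))) = cos (real k * (pi * s))" for k
  proof -
    have "real k * (pi * (2 - s)) = 2 * real k * pi - real k * (pi * s)" by (simp add: algebra_simps)
    then show ?thesis by (simp add: cos_diff)
  qed
  then show ?thesis by (simp add: Fej_def)
qed

lemma Fej_le2: assumes "M \<ge> 1" "0 < s" "s < 2" shows "Fej M (pi * s) \<le> 8 / real M * (1 / s\<^sup>2 + 1 / (2 - s)\<^sup>2)"
proof -
  have Mp: "real M > 0" using assms by simp
  have a: "0 \<le> 8 / real M * (1 / (2 - s)\<^sup>2)" "0 \<le> 8 / real M * (1 / s\<^sup>2)" by simp_all
  have e: "8 / real M * (1 / s\<^sup>2 + 1 / (2 - s)\<^sup>2) = 8 / (real M * s\<^sup>2) + 8 / real M * (1 / (2 - s)\<^sup>2)"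
     "8 / real M * (1 / s\<^sup>2 + 1 / (2 - s)\<^sup>2) = 8 / real M * (1 / s\<^sup>2) + 8 / (real M * (2 - s)\<^sup>2)"
    by (simp_all add: algebra_simps)
  show ?thesis
  proof (cases "s \<le> 1")
    case True
    then have "Fej M (pi * s) \<le> 8 / (real M * s\<^sup>2)" using Fej_le[OF assms(1), of s] assms by simp
    then show ?thesis using a e by linarith
  next
    case False
    then have "Fej M (pi * (2 - s)) \<le> 8 / (real M * (2 - s)\<^sup>2)" using Fej_le[OF assms(1), of "2 - s"] assms by simp
    then have "Fej M (pi * s) \<le> 8 / (real M * (2 - s)\<^sup>2)" using Fej_refl by simp
    then show ?thesis using a e by linarith
  qed
qed


lemma dirichlet_sin: "sin (t/2) * (1 + 2 * (\<Sum>l=1..m. cos (real l * t))) = sin ((real m + 1/2) * t)"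
proof (induction m)
  case 0 then show ?case by simp
next
  case (Suc m)
  have e: "2 * sin (t/2) * cos (real (Suc m) * t) = sin ((real (Suc m) + 1/2) * t) - sin ((real m + 1/2) * t)"
  proof -
    have a: "(real (Suc m) + 1/2) * t = real (Suc m) * t + t/2" by (simp add: algebra_simps)
    have b: "(real m + 1/2) * t = real (Suc m) * t - t/2" by (simp add: algebra_simps)
    show ?thesis unfolding a b sin_add sin_diff by (simp add: algebra_simps)
  qed
  have "sin (t/2) * (1 + 2 * (\<Sum>l=1..Suc m. cos (real l * t))) =
     sin (t/2) * (1 + 2 * (\<Sum>l=1..m. cos (real l * t))) + 2 * sin (t/2) * cos (real (Suc m) * t)"
    by (simp add: algebra_simps)
  also have "\<dots> = sin ((real (Suc m) + 1/2) * t)" unfolding Suc.IH e by simp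
  finally show ?case .
qed

lemma cos_sum_nodes:
  assumes "M \<ge> 1" "0 < n" "n < 2 * M"
  shows "(\<Sum>l=1..M-1. cos (real l * (pi * real n / real M))) = - (1 + (-1)^n) / 2"
proof -
  define t where "t = pi * real n / real M"
  have Mp: "real M > 0" using assms by simp
  have t2: "0 < t/2" "t/2 < pi" using assms Mp
    by (auto simp: t_def field_simps)
  have sp: "sin (t/2) > 0" using sin_gt_zero t2 by blast
  have "(real (M-1) + 1/2) * t = pi * real n - t/2"
    using assms Mp by (simp add: t_def of_nat_diff field_simps)
  then have "sin ((real (M-1) + 1/2) * t) = - ((-1)^n) * sin (t/2)"
    by (simp add: sin_diff)
  then have "sin (t/2) * (1 + 2 * (\<Sum>l=1..M-1. cos (real l * t))) = sin (t/2) * (- ((-1)^n))"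
    using dirichlet_sin[of t "M-1"] by simp
  then have "1 + 2 * (\<Sum>l=1..M-1. cos (real l * t)) = - ((-1)^n)" using sp
    by (metis mult_cancel_left order_less_irrefl)
  then show ?thesis unfolding t_def by (simp add: field_simps)
qed

lemma ebasis_prod: "ebasis k x * ebasis j x = cos (pi * (real k - real j) * x) - cos (pi * (real k + real j) * x)"
proof -
  have "ebasis k x * ebasis j x = 2 * (sin (pi * real k * x) * sin (pi * real j * x))"
    unfolding ebasis_def by (simp add: algebra_simps)
  also have "\<dots> = cos (pi * real k * x - pi * real j * x) - cos (pi * real k * x + pi * real j * x)"
    unfolding cos_add cos_diff by simp
  finally show ?thesis by (simp add: algebra_simps)
qed

lemma ebasis_swap: "ebasis k (real l / real M) = ebasis l (real k / real M)"
  unfolding ebasis_def by (simp add: algebra_simps)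

lemma disc_orth:
  assumes "1 \<le> k" "k \<le> M - 1" "1 \<le> j" "j \<le> M - 1"
  shows "(\<Sum>l=1..M-1. ebasis k (real l / real M) * ebasis j (real l / real M)) = (if k = j then real M else 0)"
proof -
  have M: "M \<ge> 1" using assms by simp
  have Mp: "real M > 0" using M by simp
  have eq: "(\<Sum>l=1..M-1. ebasis k (real l / real M) * ebasis j (real l / real M)) =
     (\<Sum>l=1..M-1. cos (real l * (pi * real (nat \<bar>int k - int j\<bar>) / real M))) -
     (\<Sum>l=1..M-1. cos (real l * (pi * real (k + j) / real M)))"
  proof -
    have "cos (pi * (real k - real j) * (real l / real M)) = cos (real l * (pi * real (nat \<bar>int k - int j\<bar>) / real M))" for l
    proof (cases "k \<ge> j")
      case True
      then show ?thesis by (simp add: of_nat_diff algebra_simps diff_divide_distrib)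
    next
      case False
      then have e: "real (nat \<bar>int k - int j\<bar>) = real j - real k" by simp
      have "pi * (real k - real j) * (real l / real M) = - (real l * (pi * (real j - real k) / real M))"
        by (simp add: algebra_simps diff_divide_distrib)
      then show ?thesis unfolding e by (simp only: cos_minus)
    qed
    moreover have "cos (pi * (real k + real j) * (real l / real M)) = cos (real l * (pi * real (k + j) / real M))" for l
      by (intro arg_cong[where f=cos]) (simp add: algebra_simps add_divide_distrib)
    ultimately show ?thesis unfolding ebasis_prod sum_subtractf by simp
  qed
  have s2: "(\<Sum>l=1..M-1. cos (real l * (pi * real (k + j) / real M))) = - (1 + (-1)^(k+j)) / 2"
    using cos_sum_nodes[OF M, of "k+j"] assms by simp
  show ?thesis
  proof (cases "k = j")
    case True
    have "(\<Sum>l=1..M-1. cos (real l * (pi * real (nat \<bar>int k - int j\<bar>) / real M))) = real M - 1"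
      using True M by (simp add: of_nat_diff)
    moreover have "(-1::real)^(k+j) = 1" using True by (simp add: power_add)
    ultimately show ?thesis unfolding eq s2 using True by simp
  next
    case False
    define d where "d = nat \<bar>int k - int j\<bar>"
    have d: "0 < d" "d < 2 * M" using False assms by (auto simp: d_def)
    have s1: "(\<Sum>l=1..M-1. cos (real l * (pi * real d / real M))) = - (1 + (-1)^d) / 2"
      using cos_sum_nodes[OF M d] .
    have "(-1::real)^(k+j) = (-1)^d"
    proof -
      have "k + j = d + 2 * min k j" unfolding d_def by auto
      then show ?thesis by (simp add: power_add power_mult)
    qed
    then show ?thesis unfolding eq s2 using s1 False by (simp add: d_def)
  qed
qed

lemma disc_coeff_diff: "disc_coeff M (\<lambda>y. f y - g y) k = disc_coeff M f k - disc_coeff M g k"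
  unfolding disc_coeff_def by (simp add: sum_subtractf algebra_simps)

lemma disc_coeff_poly:
  assumes "1 \<le> j" "j \<le> M - 1"
  shows "disc_coeff M (\<lambda>y. \<Sum>k=1..M-1. c k * ebasis k y) j = c j"
proof -
  have Mp: "real M > 0" using assms by simp
  have "(\<Sum>l=1..M-1. (\<Sum>k=1..M-1. c k * ebasis k (real l / real M)) * ebasis j (real l / real M))
      = (\<Sum>k=1..M-1. c k * (\<Sum>l=1..M-1. ebasis k (real l / real M) * ebasis j (real l / real M)))"
  proof -
    have "(\<Sum>l=1..M-1. (\<Sum>k=1..M-1. c k * ebasis k (real l / real M)) * ebasis j (real l / real M))
      = (\<Sum>l=1..M-1. \<Sum>k=1..M-1. c k * (ebasis k (real l / real M) * ebasis j (real l / real M)))"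
      by (simp add: sum_distrib_right mult.assoc)
    also have "\<dots> = (\<Sum>k=1..M-1. \<Sum>l=1..M-1. c k * (ebasis k (real l / real M) * ebasis j (real l / real M)))"
      by (rule sum.swap)
    finally show ?thesis by (simp add: sum_distrib_left)
  qed
  also have "\<dots> = (\<Sum>k=1..M-1. c k * (if k = j then real M else 0))"
    by (intro sum.cong refl) (use disc_orth assms in auto)
  also have "\<dots> = c j * real M" using assms by (simp add: if_distrib cong: if_cong)
  finally show ?thesis unfolding disc_coeff_def using Mp by simp
qed

lemma disc_parseval:
  assumes "M \<ge> 1"
  shows "(\<Sum>k=1..M-1. (disc_coeff M f k)\<^sup>2) = (1 / real M) * (\<Sum>l=1..M-1. (f (real l / real M))\<^sup>2)"
proof -
  have Mp: "real M > 0" using assms by simp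
  define fl where "fl l = f (real l / real M)" for l
  have "(\<Sum>k=1..M-1. (\<Sum>l=1..M-1. fl l * ebasis k (real l / real M))\<^sup>2)
     = (\<Sum>k=1..M-1. \<Sum>l=1..M-1. \<Sum>l'=1..M-1. fl l * fl l' * (ebasis l (real k / real M) * ebasis l' (real k / real M)))"
    by (simp add: power2_eq_square sum_product ebasis_swap algebra_simps)
  also have "\<dots> = (\<Sum>l=1..M-1. \<Sum>l'=1..M-1. fl l * fl l' * (\<Sum>k=1..M-1. ebasis l (real k / real M) * ebasis l' (real k / real M)))"
  proof -
    have "(\<Sum>k=1..M-1. \<Sum>l=1..M-1. \<Sum>l'=1..M-1. fl l * fl l' * (ebasis l (real k / real M) * ebasis l' (real k / real M)))
      = (\<Sum>l=1..M-1. \<Sum>k=1..M-1. \<Sum>l'=1..M-1. fl l * fl l' * (ebasis l (real k / real M) * ebasis l' (real k / real M)))"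
      by (rule sum.swap)
    also have "\<dots> = (\<Sum>l=1..M-1. \<Sum>l'=1..M-1. \<Sum>k=1..M-1. fl l * fl l' * (ebasis l (real k / real M) * ebasis l' (real k / real M)))"
      by (intro sum.cong refl sum.swap)
    finally show ?thesis by (simp add: sum_distrib_left)
  qed
  also have "\<dots> = (\<Sum>l=1..M-1. \<Sum>l'=1..M-1. fl l * fl l' * (if l = l' then real M else 0))"
  proof (intro sum.cong refl)
    fix l l' assume "l \<in> {1..M-1}" "l' \<in> {1..M-1}"
    then show "fl l * fl l' * (\<Sum>k=1..M-1. ebasis l (real k / real M) * ebasis l' (real k / real M)) =
         fl l * fl l' * (if l = l' then real M else 0)" using disc_orth[of l M l'] by simp
  qed
  also have "\<dots> = (\<Sum>l=1..M-1. (fl l)\<^sup>2 * real M)"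
    by (intro sum.cong refl) (simp add: if_distrib power2_eq_square cong: if_cong)
  finally have e: "(\<Sum>k=1..M-1. (\<Sum>l=1..M-1. fl l * ebasis k (real l / real M))\<^sup>2) = (\<Sum>l=1..M-1. (fl l)\<^sup>2) * real M"
    by (simp add: sum_distrib_right)
  have "(\<Sum>k=1..M-1. (disc_coeff M f k)\<^sup>2) = (1 / real M)^2 * (\<Sum>k=1..M-1. (\<Sum>l=1..M-1. fl l * ebasis k (real l / real M))\<^sup>2)"
  proof -
    have pk: "(disc_coeff M f k)\<^sup>2 = (1 / real M)^2 * (\<Sum>l=1..M-1. fl l * ebasis k (real l / real M))\<^sup>2" for k
      unfolding disc_coeff_def fl_def by (rule power_mult_distrib)
    show ?thesis by (simp only: pk sum_distrib_left)
  qed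
  also have "\<dots> = (1 / real M) * (\<Sum>l=1..M-1. (fl l)\<^sup>2)" unfolding e using Mp by (simp add: power2_eq_square)
  finally show ?thesis unfolding fl_def .
qed


lemma int_cos: "((\<lambda>y. cos (pi * real n * y)) has_integral (if n = 0 then 1 else 0)) {0..1}"
proof (cases "n = 0")
  case True
  then show ?thesis using has_integral_const_real[of "1::real" 0 1] by simp
next
  case False
  have np: "pi * real n \<noteq> 0" using False by simp
  have "((\<lambda>y. cos (pi * real n * y)) has_integral (sin (pi * real n * 1) / (pi * real n) - sin (pi * real n * 0) / (pi * real n))) {0..1}"
  proof (rule fundamental_theorem_of_calculus)
    fix x :: real
    have "((\<lambda>y. sin (pi * real n * y) / (pi * real n)) has_real_derivative (cos (pi * real n * x) * (pi * real n) / (pi * real n))) (at x within {0..1})"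
      by (auto intro!: derivative_eq_intros)
    then show "((\<lambda>y. sin (pi * real n * y) / (pi * real n)) has_vector_derivative cos (pi * real n * x)) (at x within {0..1})"
      using np by (simp add: has_real_derivative_iff_has_vector_derivative)
  qed simp
  then show ?thesis using False by simp
qed

lemma int_eprod:
  assumes "1 \<le> k" "1 \<le> j"
  shows "((\<lambda>y. ebasis k y * ebasis j y) has_integral (if k = j then 1 else 0)) {0..1}"
proof -
  define d where "d = nat \<bar>int k - int j\<bar>"
  have c: "cos (pi * (real k - real j) * y) = cos (pi * real d * y)" for y
  proof (cases "k \<ge> j")
    case True then show ?thesis by (simp add: d_def of_nat_diff)
  next
    case False
    then have e: "real d = real j - real k" by (simp add: d_def)
    have "pi * (real k - real j) * y = - (pi * (real j - real k) * y)" by (simp add: algebra_simps)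
    then show ?thesis unfolding e by (simp only: cos_minus)
  qed
  have "((\<lambda>y. cos (pi * real d * y) - cos (pi * real (k + j) * y)) has_integral
      ((if d = 0 then 1 else 0) - (if k + j = 0 then 1 else 0))) {0..1}"
    by (intro has_integral_diff int_cos)
  moreover have "d = 0 \<longleftrightarrow> k = j" by (auto simp: d_def)
  ultimately show ?thesis using assms unfolding ebasis_prod c by simp
qed

lemma int_poly_sq:
  assumes "\<And>k. k \<in> A \<Longrightarrow> 1 \<le> k" "finite A"
  shows "((\<lambda>y. (\<Sum>k\<in>A. c k * ebasis k y)\<^sup>2) has_integral (\<Sum>k\<in>A. (c k)\<^sup>2)) {0..1}"
proof -
  have e: "(\<Sum>k\<in>A. c k * ebasis k y)\<^sup>2 = (\<Sum>k\<in>A. \<Sum>j\<in>A. c k * c j * (ebasis k y * ebasis j y))" for y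
    by (simp add: power2_eq_square sum_product algebra_simps)
  have "((\<lambda>y. \<Sum>k\<in>A. \<Sum>j\<in>A. c k * c j * (ebasis k y * ebasis j y)) has_integral
        (\<Sum>k\<in>A. \<Sum>j\<in>A. c k * c j * (if k = j then 1 else 0))) {0..1}"
    using assms by (intro has_integral_sum has_integral_mult_right int_eprod) auto
  moreover have "(\<Sum>k\<in>A. \<Sum>j\<in>A. c k * c j * (if k = j then 1 else 0)) = (\<Sum>k\<in>A. (c k)\<^sup>2)"
    using assms(2) by (simp add: if_distrib power2_eq_square cong: if_cong)
  ultimately show ?thesis unfolding e by simp
qed


lemma cos_pair: "cos ((a::real) - b) + cos (a + b) = 2 * cos a * cos b"
  by (simp add: cos_add cos_diff)

lemma partition:
  assumes "M \<ge> 1"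
  shows "(\<Sum>l=1..M-1. Fej M (pi * (y - real l / real M)) + Fej M (pi * (y + real l / real M)))
         + Fej M (pi * y) + Fej M (pi * (y - 1)) = 2 * real M"
proof -
  define w where "w k = 1 - real k / real M" for k
  define C where "C t = (\<Sum>k=1..M-1. w k * cos (real k * t))" for t
  have F: "Fej M t = 1 + 2 * C t" for t unfolding Fej_def C_def w_def ..
  have zero: "(\<Sum>l=1..M-1. cos (real k * (pi * (y - real l / real M))) + cos (real k * (pi * (y + real l / real M))))
      + cos (real k * (pi * y)) + cos (real k * (pi * (y - 1))) = 0" if k: "k \<in> {1..M-1}" for k
  proof -
    define a where "a = real k * (pi * y)"
    have "cos (real k * (pi * (y - real l / real M))) + cos (real k * (pi * (y + real l / real M)))
        = 2 * cos a * cos (real l * (pi * real k / real M))" for l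
    proof -
      have "real k * (pi * (y - real l / real M)) = a - real l * (pi * real k / real M)"
           "real k * (pi * (y + real l / real M)) = a + real l * (pi * real k / real M)"
        by (simp_all add: a_def algebra_simps)
      then show ?thesis using cos_pair by simp
    qed
    then have s: "(\<Sum>l=1..M-1. cos (real k * (pi * (y - real l / real M))) + cos (real k * (pi * (y + real l / real M))))
       = 2 * cos a * (\<Sum>l=1..M-1. cos (real l * (pi * real k / real M)))"
      by (simp add: sum_distrib_left)
    have c1: "cos (real k * (pi * (y - 1))) = cos a * (-1)^k"
    proof -
      have "real k * (pi * (y - 1)) = a - real k * pi" by (simp add: a_def algebra_simps)
      then show ?thesis by (simp add: cos_diff)
    qed
    define S where "S = (\<Sum>l=1..M-1. cos (real l * (pi * real k / real M)))"
    have S: "S = - (1 + (-1)^k) / 2"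
      using cos_sum_nodes[OF assms, of k] k unfolding S_def by auto
    have "2 * cos a * S + cos a + cos a * (-1)^k = cos a * (2 * S + 1 + (-1)^k)" by (simp add: algebra_simps)
    also have "\<dots> = 0" unfolding S by (simp add: field_simps)
    finally show ?thesis unfolding s c1 a_def[symmetric] S_def[symmetric] by simp
  qed
  have "(\<Sum>l=1..M-1. C (pi * (y - real l / real M)) + C (pi * (y + real l / real M))) + C (pi * y) + C (pi * (y - 1))
     = (\<Sum>k=1..M-1. w k * ((\<Sum>l=1..M-1. cos (real k * (pi * (y - real l / real M))) + cos (real k * (pi * (y + real l / real M))))
      + cos (real k * (pi * y)) + cos (real k * (pi * (y - 1)))))"
  proof -
    have "(\<Sum>l=1..M-1. C (pi * (y - real l / real M)) + C (pi * (y + real l / real M)))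
       = (\<Sum>l=1..M-1. \<Sum>k=1..M-1. w k * (cos (real k * (pi * (y - real l / real M))) + cos (real k * (pi * (y + real l / real M)))))"
      unfolding C_def by (simp add: sum.distrib[symmetric] algebra_simps)
    also have "\<dots> = (\<Sum>k=1..M-1. \<Sum>l=1..M-1. w k * (cos (real k * (pi * (y - real l / real M))) + cos (real k * (pi * (y + real l / real M)))))"
      by (rule sum.swap)
    finally show ?thesis unfolding C_def by (simp add: sum.distrib[symmetric] sum_distrib_left algebra_simps)
  qed
  also have "\<dots> = 0" using zero by simp
  finally have z: "(\<Sum>l=1..M-1. C (pi * (y - real l / real M)) + C (pi * (y + real l / real M))) + C (pi * y) + C (pi * (y - 1)) = 0" .
  have "(\<Sum>l=1..M-1. Fej M (pi * (y - real l / real M)) + Fej M (pi * (y + real l / real M)))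
         + Fej M (pi * y) + Fej M (pi * (y - 1)) = 2 * real (M - 1) + 2 +
       2 * ((\<Sum>l=1..M-1. C (pi * (y - real l / real M)) + C (pi * (y + real l / real M))) + C (pi * y) + C (pi * (y - 1)))"
    unfolding F by (simp add: sum.distrib sum_distrib_left algebra_simps)
  also have "\<dots> = 2 * real M" unfolding z using assms by (simp add: of_nat_diff)
  finally show ?thesis .
qed

definition Gsm :: "nat \<Rightarrow> (real \<Rightarrow> real) \<Rightarrow> real \<Rightarrow> real" where
  "Gsm M H y = (\<Sum>k=1..M-1. ((1 - real k / real M) * disc_coeff M H k) * ebasis k y)"

lemma ebasis_kk: "ebasis k z * ebasis k y = cos (real k * (pi * (y - z))) - cos (real k * (pi * (y + z)))"
proof -
  have "ebasis k z * ebasis k y = 2 * (sin (pi * real k * y) * sin (pi * real k * z))"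
    unfolding ebasis_def by (simp add: algebra_simps)
  also have "\<dots> = cos (pi * real k * y - pi * real k * z) - cos (pi * real k * y + pi * real k * z)"
    unfolding cos_add cos_diff by simp
  finally show ?thesis by (simp add: algebra_simps)
qed

lemma kernel_sum:
  "(\<Sum>k=1..M-1. (1 - real k / real M) * (ebasis k z * ebasis k y)) = (Fej M (pi * (y - z)) - Fej M (pi * (y + z))) / 2"
  unfolding ebasis_kk right_diff_distrib sum_subtractf Fej_def by simp

lemma Gsm_repr:
  assumes "M \<ge> 1"
  shows "Gsm M H y = (1 / (2 * real M)) * (\<Sum>l=1..M-1. H (real l / real M) *
            (Fej M (pi * (y - real l / real M)) - Fej M (pi * (y + real l / real M))))"
proof -
  have "Gsm M H y = (\<Sum>k=1..M-1. \<Sum>l=1..M-1. (1 / real M) * H (real l / real M) * ((1 - real k / real M) * (ebasis k (real l / real M) * ebasis k y)))"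
    unfolding Gsm_def disc_coeff_def sum_distrib_left sum_distrib_right by (intro sum.cong refl) (simp add: field_simps)
  also have "\<dots> = (\<Sum>l=1..M-1. \<Sum>k=1..M-1. (1 / real M) * H (real l / real M) * ((1 - real k / real M) * (ebasis k (real l / real M) * ebasis k y)))"
    by (rule sum.swap)
  also have "\<dots> = (\<Sum>l=1..M-1. (1 / real M) * H (real l / real M) * ((Fej M (pi * (y - real l / real M)) - Fej M (pi * (y + real l / real M))) / 2))"
    by (simp only: sum_distrib_left[symmetric] kernel_sum)
  also have "\<dots> = (1 / (2 * real M)) * (\<Sum>l=1..M-1. H (real l / real M) *
            (Fej M (pi * (y - real l / real M)) - Fej M (pi * (y + real l / real M))))"
    unfolding sum_distrib_left by (intro sum.cong refl) (simp add: field_simps)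
  finally show ?thesis .
qed

lemma aux_alg: assumes a: "(h::real) = c * (h * (S + F0 + F1))" and b: "A = h * S - X"
  shows "h - c * X = c * (A + h * (F0 + F1))"
proof -
  have "c * (h * S - X + h * (F0 + F1)) = c * (h * (S + F0 + F1)) - c * X" by (simp add: algebra_simps)
  then show ?thesis unfolding b using a by simp
qed

lemma R_repr:
  assumes "M \<ge> 1"
  shows "H y - Gsm M H y = (1 / (2 * real M)) * ((\<Sum>l=1..M-1. (H y - H (real l / real M)) * Fej M (pi * (y - real l / real M))
       + (H y + H (real l / real M)) * Fej M (pi * (y + real l / real M))) + H y * (Fej M (pi * y) + Fej M (pi * (y - 1))))"
proof -
  have Mp: "real M > 0" using assms by simp
  have "H y = (1 / (2 * real M)) * (H y * ((\<Sum>l=1..M-1. Fej M (pi * (y - real l / real M)) + Fej M (pi * (y + real l / real M)))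
         + Fej M (pi * y) + Fej M (pi * (y - 1))))"
    unfolding partition[OF assms] using Mp by simp
  moreover have "(\<Sum>l=1..M-1. (H y - H (real l / real M)) * Fej M (pi * (y - real l / real M))
       + (H y + H (real l / real M)) * Fej M (pi * (y + real l / real M)))
     = H y * (\<Sum>l=1..M-1. Fej M (pi * (y - real l / real M)) + Fej M (pi * (y + real l / real M)))
       - (\<Sum>l=1..M-1. H (real l / real M) * (Fej M (pi * (y - real l / real M)) - Fej M (pi * (y + real l / real M))))"
    unfolding sum_distrib_left sum_subtractf[symmetric] by (intro sum.cong refl) (simp add: algebra_simps)
  ultimately show ?thesis unfolding Gsm_repr[OF assms] by (rule aux_alg)
qed


lemma tail_sum_aux: assumes "R > 0" shows "(\<Sum>l=1..n. 1 / (R + real l)\<^sup>2) \<le> 1 / R - 1 / (R + real n)"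
proof (induction n)
  case 0 then show ?case by simp
next
  case (Suc n)
  have p: "R + real n > 0" using assms by simp
  have "1 / (R + real (Suc n))\<^sup>2 \<le> 1 / (R + real n) - 1 / (R + real (Suc n))"
  proof -
    have "1 / (R + real n) - 1 / (R + real (Suc n)) = 1 / ((R + real n) * (R + real n + 1))"
      using p by (simp add: field_simps)
    moreover have "1 / (R + real (Suc n))\<^sup>2 \<le> 1 / ((R + real n) * (R + real n + 1))"
    proof (rule divide_left_mono)
      have "(R + real n) * (R + real n + 1) \<le> (R + real n + 1) * (R + real n + 1)"
        by (rule mult_right_mono) (use p in auto)
      then show "(R + real n) * (R + real n + 1) \<le> (R + real (Suc n))\<^sup>2" by (simp add: power2_eq_square algebra_simps)
      show "0 < (R + real (Suc n))\<^sup>2 * ((R + real n) * (R + real n + 1))" using p by (intro mult_pos_pos) auto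
    qed simp
    ultimately show ?thesis by simp
  qed
  then show ?case using Suc.IH by simp
qed

lemma tail_sum: assumes "\<eta> > 0" "M \<ge> 1"
  shows "(\<Sum>l=1..M-1. 1 / (\<eta> + real l / real M)\<^sup>2) \<le> real M / \<eta>"
proof -
  have Mp: "real M > 0" using assms by simp
  have "(\<Sum>l=1..M-1. 1 / (\<eta> + real l / real M)\<^sup>2) = (real M)\<^sup>2 * (\<Sum>l=1..M-1. 1 / (real M * \<eta> + real l)\<^sup>2)"
    unfolding sum_distrib_left using Mp by (intro sum.cong refl) (simp add: field_simps)
  also have "\<dots> \<le> (real M)\<^sup>2 * (1 / (real M * \<eta>) - 1 / (real M * \<eta> + real (M - 1)))"
    using tail_sum_aux[of "real M * \<eta>" "M-1"] assms Mp by (intro mult_left_mono) auto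
  also have "\<dots> \<le> (real M)\<^sup>2 * (1 / (real M * \<eta>))"
    using assms Mp by (intro mult_left_mono) auto
  also have "\<dots> = real M / \<eta>" using Mp by (simp add: power2_eq_square)
  finally show ?thesis .
qed

lemma abs_E_le:
  fixes u v a b :: "nat \<Rightarrow> real"
  assumes "\<And>l. 0 \<le> a l" "\<And>l. 0 \<le> b l" "0 \<le> F0" "0 \<le> F1"
  shows "\<bar>(\<Sum>l\<in>A. u l * a l + v l * b l) + h * (F0 + F1)\<bar> \<le> (\<Sum>l\<in>A. \<bar>u l\<bar> * a l + \<bar>v l\<bar> * b l) + \<bar>h\<bar> * (F0 + F1)"
proof -
  have "\<bar>\<Sum>l\<in>A. u l * a l + v l * b l\<bar> \<le> (\<Sum>l\<in>A. \<bar>u l * a l + v l * b l\<bar>)" by (rule sum_abs)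
  also have "\<dots> \<le> (\<Sum>l\<in>A. \<bar>u l\<bar> * a l + \<bar>v l\<bar> * b l)"
    by (intro sum_mono) (use assms in \<open>auto simp: abs_mult intro!: order_trans[OF abs_triangle_ineq]\<close>)
  moreover have "\<bar>h * (F0 + F1)\<bar> = \<bar>h\<bar> * (F0 + F1)" using assms by (simp add: abs_mult)
  ultimately show ?thesis using abs_triangle_ineq[of "\<Sum>l\<in>A. u l * a l + v l * b l" "h * (F0 + F1)"] by linarith
qed

lemma R_abs:
  assumes "M \<ge> 1"
  shows "\<bar>H y - Gsm M H y\<bar> \<le> (1 / (2 * real M)) * ((\<Sum>l=1..M-1. \<bar>H y - H (real l / real M)\<bar> * Fej M (pi * (y - real l / real M))
       + \<bar>H y + H (real l / real M)\<bar> * Fej M (pi * (y + real l / real M))) + \<bar>H y\<bar> * (Fej M (pi * y) + Fej M (pi * (y - 1))))"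
proof -
  have e: "\<bar>1 / (2 * real M)\<bar> = 1 / (2 * real M)" by simp
  show ?thesis unfolding R_repr[OF assms] abs_mult e
    by (intro mult_left_mono abs_E_le Fej_nonneg) (use assms in auto)
qed

lemma R_global:
  assumes "M \<ge> 1" "y \<in> {0..1}" "\<And>x. x \<in> {0..1} \<Longrightarrow> \<bar>H x\<bar> \<le> K"
  shows "\<bar>H y - Gsm M H y\<bar> \<le> 2 * K"
proof -
  have Mp: "real M > 0" using assms by simp
  have nodes: "real l / real M \<in> {0..1}" if "l \<in> {1..M-1}" for l using that Mp by auto
  have hy: "\<bar>H y\<bar> \<le> K" using assms by auto
  have K0: "0 \<le> K" using hy by linarith
  have "(\<Sum>l=1..M-1. \<bar>H y - H (real l / real M)\<bar> * Fej M (pi * (y - real l / real M))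
       + \<bar>H y + H (real l / real M)\<bar> * Fej M (pi * (y + real l / real M))) + \<bar>H y\<bar> * (Fej M (pi * y) + Fej M (pi * (y - 1)))
     \<le> (\<Sum>l=1..M-1. 2 * K * Fej M (pi * (y - real l / real M)) + 2 * K * Fej M (pi * (y + real l / real M))) + 2 * K * (Fej M (pi * y) + Fej M (pi * (y - 1)))"
  proof (intro add_mono sum_mono mult_right_mono)
    fix l assume l: "l \<in> {1..M-1}"
    show "\<bar>H y - H (real l / real M)\<bar> \<le> 2 * K" "\<bar>H y + H (real l / real M)\<bar> \<le> 2 * K"
      using hy assms(3)[OF nodes[OF l]] by linarith+
  qed (use hy K0 Fej_nonneg assms in \<open>auto intro: order_trans[OF hy]\<close>)
  also have "\<dots> = 2 * K * 2 * real M"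
  proof -
    have "(\<Sum>l=1..M-1. 2 * K * Fej M (pi * (y - real l / real M)) + 2 * K * Fej M (pi * (y + real l / real M))) + 2 * K * (Fej M (pi * y) + Fej M (pi * (y - 1)))
      = 2 * K * ((\<Sum>l=1..M-1. Fej M (pi * (y - real l / real M)) + Fej M (pi * (y + real l / real M)))
         + Fej M (pi * y) + Fej M (pi * (y - 1)))" by (simp add: sum_distrib_left algebra_simps)
    then show ?thesis unfolding partition[OF assms(1), of y] by simp
  qed
  finally have "(\<Sum>l=1..M-1. \<bar>H y - H (real l / real M)\<bar> * Fej M (pi * (y - real l / real M))
       + \<bar>H y + H (real l / real M)\<bar> * Fej M (pi * (y + real l / real M))) + \<bar>H y\<bar> * (Fej M (pi * y) + Fej M (pi * (y - 1)))
     \<le> 2 * K * 2 * real M" .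
  then have "(1 / (2 * real M)) * ((\<Sum>l=1..M-1. \<bar>H y - H (real l / real M)\<bar> * Fej M (pi * (y - real l / real M))
       + \<bar>H y + H (real l / real M)\<bar> * Fej M (pi * (y + real l / real M))) + \<bar>H y\<bar> * (Fej M (pi * y) + Fej M (pi * (y - 1))))
     \<le> (1 / (2 * real M)) * (2 * K * 2 * real M)" using Mp by (intro mult_left_mono) auto
  also have "\<dots> = 2 * K" using Mp by simp
  finally show ?thesis using R_abs[OF assms(1), of H y] by linarith
qed

lemma rev_sum_nodes: assumes "M \<ge> 1"
  shows "(\<Sum>l=1..M-1. g (real (M - l) / real M)) = (\<Sum>l=1..M-1. g (real l / real M))"
proof -
  have "(\<Sum>l=1..M-1. g (real l / real M)) = (\<Sum>l=1..M-1. g (real (M - 1 + 1 - l) / real M))"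
    by (rule sum.atLeastAtMost_rev)
  also have "\<dots> = (\<Sum>l=1..M-1. g (real (M - l) / real M))" using assms by simp
  finally show ?thesis by simp
qed

lemma R_interior:
  assumes M: "M \<ge> 1" and hK: "\<And>x. x \<in> {0..1} \<Longrightarrow> \<bar>H x\<bar> \<le> K"
    and hL: "\<And>x z. x \<in> {0..1} \<Longrightarrow> z \<in> {0..1} \<Longrightarrow> \<bar>H x - H z\<bar> \<le> L * \<bar>x - z\<bar> powr p"
    and L0: "0 \<le> L" and p0: "0 \<le> p" and eta: "0 < \<eta>" "1 \<le> real M * \<eta>" and rho: "0 < \<rho>"
    and y: "\<eta> \<le> y" "y \<le> 1 - \<eta>"
  shows "\<bar>H y - Gsm M H y\<bar> \<le> L * \<rho> powr p + 4 * L / (real M * \<rho>\<^sup>2) + 24 * K / (real M * \<eta>)"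
proof -
  have Mp: "real M > 0" using M by simp
  have y01: "y \<in> {0..1}" using y eta by auto
  have nodes: "real l / real M \<in> {0..1}" if "l \<in> {1..M-1}" for l using that Mp by auto
  have hy: "\<bar>H y\<bar> \<le> K" using hK y01 by auto
  have K0: "0 \<le> K" using hy by linarith
  define a where "a l = Fej M (pi * (y - real l / real M))" for l
  define b where "b l = Fej M (pi * (y + real l / real M))" for l
  define F0 where "F0 = Fej M (pi * y)"
  define F1 where "F1 = Fej M (pi * (y - 1))"
  have a0: "0 \<le> a l" and b0: "0 \<le> b l" for l unfolding a_def b_def using Fej_nonneg M by auto
  have F00: "0 \<le> F0" "0 \<le> F1" unfolding F0_def F1_def using Fej_nonneg M by auto
  have part: "(\<Sum>l=1..M-1. a l + b l) + F0 + F1 = 2 * real M"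
    unfolding a_def b_def F0_def F1_def using partition[OF M] .
  have suma: "(\<Sum>l=1..M-1. a l) \<le> 2 * real M"
  proof -
    have "(\<Sum>l=1..M-1. a l) \<le> (\<Sum>l=1..M-1. a l + b l)" by (intro sum_mono) (use b0 in auto)
    then show ?thesis using part F00 by linarith
  qed
  have T1: "(\<Sum>l=1..M-1. \<bar>H y - H (real l / real M)\<bar> * a l) \<le> L * \<rho> powr p * (2 * real M) + (real M - 1) * (8 * L / (real M * \<rho>\<^sup>2))"
  proof -
    have "(\<Sum>l=1..M-1. \<bar>H y - H (real l / real M)\<bar> * a l) \<le> (\<Sum>l=1..M-1. L * \<rho> powr p * a l + 8 * L / (real M * \<rho>\<^sup>2))"
    proof (intro sum_mono)
      fix l assume l: "l \<in> {1..M-1}"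
      define d where "d = y - real l / real M"
      have hd: "\<bar>H y - H (real l / real M)\<bar> \<le> L * \<bar>d\<bar> powr p" unfolding d_def using hL[OF y01 nodes[OF l]] .
      have d1: "\<bar>d\<bar> \<le> 1" using nodes[OF l] y01 unfolding d_def atLeastAtMost_iff abs_le_iff by linarith
      have ex: "0 \<le> 8 * L / (real M * \<rho>\<^sup>2)" using L0 Mp by simp
      show "\<bar>H y - H (real l / real M)\<bar> * a l \<le> L * \<rho> powr p * a l + 8 * L / (real M * \<rho>\<^sup>2)"
      proof (cases "\<bar>d\<bar> < \<rho>")
        case True
        have "\<bar>d\<bar> powr p \<le> \<rho> powr p" using True p0 by (intro powr_mono2) auto
        then have "\<bar>H y - H (real l / real M)\<bar> \<le> L * \<rho> powr p" using hd L0 by (meson order_trans mult_left_mono)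
        then have "\<bar>H y - H (real l / real M)\<bar> * a l \<le> L * \<rho> powr p * a l" using a0 by (intro mult_right_mono) auto
        then show ?thesis using ex by linarith
      next
        case False
        then have dp: "0 < \<bar>d\<bar>" using rho by linarith
        have "\<bar>d\<bar> powr p \<le> 1" using powr_le1[OF p0, of "\<bar>d\<bar>"] d1 by simp
        then have h1: "\<bar>H y - H (real l / real M)\<bar> \<le> L" using hd L0 by (meson order_trans mult_left_le)
        have "a l \<le> 8 / (real M * d\<^sup>2)" unfolding a_def d_def[symmetric] using Fej_le[OF M dp d1] .
        also have "\<dots> \<le> 8 / (real M * \<rho>\<^sup>2)"
        proof -
          have "\<rho>\<^sup>2 \<le> d\<^sup>2" using False rho by (metis abs_le_square_iff abs_of_pos not_less order_less_imp_le)
          moreover have "0 < real M * d\<^sup>2 * (real M * \<rho>\<^sup>2)" using Mp rho dp by (intro mult_pos_pos) auto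
          ultimately show ?thesis using Mp rho by (intro divide_left_mono mult_left_mono) auto
        qed
        finally have "\<bar>H y - H (real l / real M)\<bar> * a l \<le> L * (8 / (real M * \<rho>\<^sup>2))"
          using h1 a0 L0 by (intro mult_mono) auto
        moreover have "0 \<le> L * \<rho> powr p * a l" using L0 a0 by simp
        moreover have "L * (8 / (real M * \<rho>\<^sup>2)) = 8 * L / (real M * \<rho>\<^sup>2)" by simp
        ultimately show ?thesis by linarith
      qed
    qed
    also have "\<dots> = L * \<rho> powr p * (\<Sum>l=1..M-1. a l) + (real M - 1) * (8 * L / (real M * \<rho>\<^sup>2))"
      using M by (simp add: sum.distrib sum_distrib_left of_nat_diff)
    also have "\<dots> \<le> L * \<rho> powr p * (2 * real M) + (real M - 1) * (8 * L / (real M * \<rho>\<^sup>2))"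
      using suma L0 M by (intro add_mono mult_left_mono) auto
    finally show ?thesis .
  qed
  have T2: "(\<Sum>l=1..M-1. \<bar>H y + H (real l / real M)\<bar> * b l) \<le> 32 * K / \<eta>"
  proof -
    define g where "g t = 1 / (\<eta> + t)\<^sup>2" for t
    have "(\<Sum>l=1..M-1. \<bar>H y + H (real l / real M)\<bar> * b l) \<le>
          (\<Sum>l=1..M-1. 2 * K * (8 / real M * (g (real l / real M) + g (real (M - l) / real M))))"
    proof (intro sum_mono)
      fix l assume l: "l \<in> {1..M-1}"
      define s where "s = y + real l / real M"
      have lM: "1 \<le> real l" "real l \<le> real M - 1" using l M by auto
      have lo: "\<eta> + real l / real M \<le> s" unfolding s_def using y by simp
      have p1: "0 < \<eta> + real l / real M" using eta Mp by (simp add: add_pos_nonneg)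
      have rl: "real (M - l) / real M = 1 - real l / real M" proof -
        have "l \<le> M" using l by auto
        then have "real (M - l) = real M - real l" by (simp add: of_nat_diff)
        then show ?thesis using Mp by (simp add: field_simps)
      qed
      have lo2: "\<eta> + real (M - l) / real M \<le> 2 - s" unfolding s_def rl using y by simp
      have p2: "0 < \<eta> + real (M - l) / real M" using eta Mp by (simp add: add_pos_nonneg)
      have s2: "s < 2" using lo2 p2 by linarith
      have s0: "0 < s" using lo p1 by linarith
      have "b l \<le> 8 / real M * (1 / s\<^sup>2 + 1 / (2 - s)\<^sup>2)" unfolding b_def s_def[symmetric] using Fej_le2[OF M s0 s2] .
      also have "\<dots> \<le> 8 / real M * (g (real l / real M) + g (real (M - l) / real M))"
        unfolding g_def using lo lo2 p1 p2 Mp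
        by (intro mult_left_mono add_mono divide_left_mono power_mono mult_pos_pos) auto
      finally have bl: "b l \<le> 8 / real M * (g (real l / real M) + g (real (M - l) / real M))" .
      have "\<bar>H y + H (real l / real M)\<bar> \<le> 2 * K" using hy hK[OF nodes[OF l]] by linarith
      then show "\<bar>H y + H (real l / real M)\<bar> * b l \<le> 2 * K * (8 / real M * (g (real l / real M) + g (real (M - l) / real M)))"
        using bl b0 K0 by (intro mult_mono) auto
    qed
    also have "\<dots> = 2 * K * (8 / real M) * ((\<Sum>l=1..M-1. g (real l / real M)) + (\<Sum>l=1..M-1. g (real (M - l) / real M)))"
      by (simp add: sum.distrib sum_distrib_left algebra_simps)
    also have "\<dots> = 2 * K * (8 / real M) * (2 * (\<Sum>l=1..M-1. g (real l / real M)))"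
      unfolding rev_sum_nodes[OF M] by simp
    also have "\<dots> \<le> 2 * K * (8 / real M) * (2 * (real M / \<eta>))"
      using tail_sum[OF eta(1) M] K0 Mp unfolding g_def by (intro mult_left_mono) auto
    also have "\<dots> = 32 * K / \<eta>" using Mp by (simp add: field_simps)
    finally show ?thesis .
  qed
  have T3: "\<bar>H y\<bar> * (F0 + F1) \<le> 16 * K / \<eta>"
  proof -
    have yp: "0 < \<bar>y\<bar>" "\<bar>y\<bar> \<le> 1" using y eta by auto
    have yp2: "0 < \<bar>y - 1\<bar>" "\<bar>y - 1\<bar> \<le> 1" using y eta by auto
    have "F0 \<le> 8 / (real M * y\<^sup>2)" unfolding F0_def using Fej_le[OF M yp] by simp
    also have "\<dots> \<le> 8 / (real M * \<eta>\<^sup>2)" using y eta Mp by (intro divide_left_mono mult_left_mono power_mono) auto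
    finally have f0: "F0 \<le> 8 / (real M * \<eta>\<^sup>2)" .
    have "F1 \<le> 8 / (real M * (y - 1)\<^sup>2)" unfolding F1_def using Fej_le[OF M yp2] by simp
    also have "\<dots> \<le> 8 / (real M * \<eta>\<^sup>2)"
    proof -
      have "\<eta>\<^sup>2 \<le> (y - 1)\<^sup>2" using y eta by (metis abs_le_square_iff abs_of_pos le_diff_eq abs_minus_commute abs_of_nonneg diff_ge_0_iff_ge add.commute order_trans less_imp_le)
      moreover have "0 < \<eta>\<^sup>2" using eta by simp
      ultimately have "0 < real M * (y - 1)\<^sup>2 * (real M * \<eta>\<^sup>2)" using Mp by (intro mult_pos_pos) auto
      then show ?thesis using \<open>\<eta>\<^sup>2 \<le> (y - 1)\<^sup>2\<close> eta Mp by (intro divide_left_mono mult_left_mono) auto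
    qed
    finally have f1: "F1 \<le> 8 / (real M * \<eta>\<^sup>2)" .
    have "\<bar>H y\<bar> * (F0 + F1) \<le> K * (16 / (real M * \<eta>\<^sup>2))"
    proof -
      have "F0 + F1 \<le> 8 / (real M * \<eta>\<^sup>2) + 8 / (real M * \<eta>\<^sup>2)" using f0 f1 by (rule add_mono)
      also have "\<dots> = 16 / (real M * \<eta>\<^sup>2)" by simp
      finally have "F0 + F1 \<le> 16 / (real M * \<eta>\<^sup>2)" .
      then show ?thesis using hy F00 K0 by (intro mult_mono) auto
    qed
    also have "\<dots> \<le> K * (16 / \<eta>)"
    proof -
      have "16 / (real M * \<eta>\<^sup>2) = (16 / \<eta>) * (1 / (real M * \<eta>))" using eta Mp by (simp add: power2_eq_square field_simps)
      also have "\<dots> \<le> 16 / \<eta>" using eta by (intro mult_left_le) (auto simp: field_simps)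
      finally show ?thesis using K0 by (intro mult_left_mono) auto
    qed
    finally show ?thesis by (simp add: mult.commute)
  qed
  have E: "(\<Sum>l=1..M-1. \<bar>H y - H (real l / real M)\<bar> * a l + \<bar>H y + H (real l / real M)\<bar> * b l) + \<bar>H y\<bar> * (F0 + F1)
     \<le> L * \<rho> powr p * (2 * real M) + (real M - 1) * (8 * L / (real M * \<rho>\<^sup>2)) + 32 * K / \<eta> + 16 * K / \<eta>"
    using T1 T2 T3 by (simp add: sum.distrib)
  have "\<bar>H y - Gsm M H y\<bar> \<le> (1 / (2 * real M)) * ((\<Sum>l=1..M-1. \<bar>H y - H (real l / real M)\<bar> * a l + \<bar>H y + H (real l / real M)\<bar> * b l) + \<bar>H y\<bar> * (F0 + F1))"
    using R_abs[OF M, of H y] unfolding a_def b_def F0_def F1_def .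
  also have "\<dots> \<le> (1 / (2 * real M)) * (L * \<rho> powr p * (2 * real M) + (real M - 1) * (8 * L / (real M * \<rho>\<^sup>2)) + 32 * K / \<eta> + 16 * K / \<eta>)"
    using E Mp by (intro mult_left_mono) auto
  also have "\<dots> = L * \<rho> powr p + (real M - 1) / real M * (4 * L / (real M * \<rho>\<^sup>2)) + 24 * K / (real M * \<eta>)"
    using Mp rho eta by (simp add: field_simps)
  also have "\<dots> \<le> L * \<rho> powr p + 4 * L / (real M * \<rho>\<^sup>2) + 24 * K / (real M * \<eta>)"
  proof -
    have "(real M - 1) / real M * (4 * L / (real M * \<rho>\<^sup>2)) \<le> 1 * (4 * L / (real M * \<rho>\<^sup>2))"
      using Mp L0 by (intro mult_right_mono) auto
    then show ?thesis by simp
  qed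
  finally show ?thesis .
qed


lemma holder_cont:
  assumes p: "0 < p" and h: "\<And>x z. x \<in> {0..1} \<Longrightarrow> z \<in> {0..1} \<Longrightarrow> \<bar>H x - H z\<bar> \<le> L * \<bar>x - z\<bar> powr p"
  shows "continuous_on {0..1::real} H"
  unfolding continuous_on_def
proof
  fix x :: real assume x: "x \<in> {0..1}"
  have "((\<lambda>z. H z - H x) \<longlongrightarrow> 0) (at x within {0..1})"
  proof (rule Lim_null_comparison)
    show "\<forall>\<^sub>F z in at x within {0..1}. norm (H z - H x) \<le> L * \<bar>z - x\<bar> powr p"
      unfolding eventually_at_filter using h x by (auto intro: always_eventually)
    have "((\<lambda>z. L * \<bar>z - x\<bar> powr p) \<longlongrightarrow> L * \<bar>x - x\<bar> powr p) (at x within {0..1})"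
      using p by (intro tendsto_intros) auto
    then show "((\<lambda>z. L * \<bar>z - x\<bar> powr p) \<longlongrightarrow> 0) (at x within {0..1})" by simp
  qed
  then show "(H \<longlongrightarrow> H x) (at x within {0..1})" by (simp add: LIM_zero_iff)
qed

lemma holder_facts:
  assumes "H \<in> holder_space \<alpha>" "0 < \<alpha>"
  shows "\<And>x. x \<in> {0..1} \<Longrightarrow> \<bar>H x\<bar> \<le> sup_norm H"
    and "0 \<le> sup_norm H"
    and "\<exists>Lh. 0 \<le> Lh \<and> Lh \<le> holder_norm \<alpha> H \<and> (\<forall>x\<in>{0..1}. \<forall>z\<in>{0..1}. \<bar>H x - H z\<bar> \<le> Lh * \<bar>x - z\<bar> powr (2 * \<alpha>))"
    and "continuous_on {0..1} H"
proof -
  obtain L0 where L0: "\<forall>x\<in>{0..1}. \<forall>y\<in>{0..1}. \<bar>H x - H y\<bar> \<le> L0 * \<bar>x - y\<bar> powr (2 * \<alpha>)"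
    using assms(1) unfolding holder_space_def by blast
  define L1 where "L1 = max L0 0"
  have L1: "\<bar>H x - H y\<bar> \<le> L1 * \<bar>x - y\<bar> powr (2 * \<alpha>)" if "x \<in> {0..1}" "y \<in> {0..1}" for x y
  proof -
    have "L0 * \<bar>x - y\<bar> powr (2 * \<alpha>) \<le> L1 * \<bar>x - y\<bar> powr (2 * \<alpha>)" unfolding L1_def by (intro mult_right_mono) auto
    then show ?thesis using L0 that by force
  qed
  have L10: "0 \<le> L1" unfolding L1_def by simp
  have bnd: "\<bar>H x\<bar> \<le> \<bar>H 0\<bar> + L1" if "x \<in> {0..1}" for x
  proof -
    have "\<bar>x - 0\<bar> powr (2 * \<alpha>) \<le> 1" using that assms(2) by (intro powr_le1) auto
    then have "L1 * \<bar>x - 0\<bar> powr (2 * \<alpha>) \<le> L1" using L10 by (simp add: mult_left_le)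
    then show ?thesis using L1[OF that, of 0] by auto
  qed
  have bdd: "bdd_above ((\<lambda>x. \<bar>H x\<bar>) ` {0..1})" using bnd by (intro bdd_aboveI2[where M="\<bar>H 0\<bar> + L1"]) auto
  show sup: "\<bar>H x\<bar> \<le> sup_norm H" if "x \<in> {0..1}" for x
    unfolding sup_norm_def using bdd that by (rule cSUP_upper2) simp
  show s0: "0 \<le> sup_norm H" using sup[of 0] by (meson abs_ge_zero atLeastAtMost_iff order_trans zero_le_one order_refl)
  define P where "P = {(x, y). x \<in> {0..1::real} \<and> y \<in> {0..1::real} \<and> x \<noteq> y}"
  define rat where "rat p = \<bar>H (fst p) - H (snd p)\<bar> / \<bar>fst p - snd p\<bar> powr (2 * \<alpha>)" for p :: "real \<times> real"
  define Lh where "Lh = (SUP p\<in>P. rat p)"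
  have rat_le: "rat p \<le> L1" if pP: "p \<in> P" for p
  proof -
    obtain x y where p: "p = (x, y)" "x \<in> {0..1}" "y \<in> {0..1}" "x \<noteq> y" using pP unfolding P_def by (cases p) auto
    have pos: "0 < \<bar>x - y\<bar> powr (2 * \<alpha>)" using p by simp
    show ?thesis unfolding rat_def p(1) using L1[OF p(2,3)] pos by (simp add: divide_le_eq)
  qed
  have bddr: "bdd_above (rat ` P)" using rat_le by (intro bdd_aboveI2[where M=L1]) auto
  have rat_Lh: "rat p \<le> Lh" if "p \<in> P" for p unfolding Lh_def using cSUP_upper[OF that bddr] .
  have "(0, 1) \<in> P" unfolding P_def by simp
  moreover have "0 \<le> rat (0, 1)" unfolding rat_def by simp
  ultimately have Lh0: "0 \<le> Lh" using rat_Lh by (meson order_trans)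
  have "holder_norm \<alpha> H = sup_norm H + Lh" unfolding holder_norm_def Lh_def P_def rat_def by simp
  then have Lhn: "Lh \<le> holder_norm \<alpha> H" using s0 by simp
  have Lhh: "\<bar>H x - H z\<bar> \<le> Lh * \<bar>x - z\<bar> powr (2 * \<alpha>)" if "x \<in> {0..1}" "z \<in> {0..1}" for x z
  proof (cases "x = z")
    case True then show ?thesis by simp
  next
    case False
    then have "(x, z) \<in> P" using that unfolding P_def by simp
    then have "rat (x, z) \<le> Lh" by (rule rat_Lh)
    moreover have pos: "0 < \<bar>x - z\<bar> powr (2 * \<alpha>)" using False by simp
    ultimately show ?thesis unfolding rat_def by (simp add: divide_le_eq)
  qed
  show "\<exists>Lh. 0 \<le> Lh \<and> Lh \<le> holder_norm \<alpha> H \<and> (\<forall>x\<in>{0..1}. \<forall>z\<in>{0..1}. \<bar>H x - H z\<bar> \<le> Lh * \<bar>x - z\<bar> powr (2 * \<alpha>))"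
    using Lh0 Lhn Lhh by blast
  show "continuous_on {0..1} H" using holder_cont[of "2 * \<alpha>" H L1] assms(2) L1 by auto
qed


lemma cont_ebasis: "continuous_on S (ebasis k)"
  unfolding ebasis_def by (intro continuous_intros)

lemma cont_Gsm: "continuous_on S (Gsm M H)"
proof -
  have "Gsm M H = (\<lambda>y. \<Sum>k=1..M-1. ((1 - real k / real M) * disc_coeff M H k) * ebasis k y)"
    by (rule ext) (simp only: Gsm_def)
  then show ?thesis unfolding ebasis_def by (simp only:) (intro continuous_intros)
qed

lemma cont_interp: "continuous_on S (disc_interp M H)"
proof -
  have "disc_interp M H = (\<lambda>y. \<Sum>k=1..M-1. disc_coeff M H k * ebasis k y)"
    by (rule ext) (simp only: disc_interp_def)
  then show ?thesis unfolding ebasis_def by (simp only:) (intro continuous_intros)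
qed

lemma L2_decomp:
  assumes M: "M \<ge> 1" and Hc: "continuous_on {0..1} H"
  shows "(L2_norm (\<lambda>y. H y - disc_interp M H y))\<^sup>2 \<le>
     2 * integral {0..1} (\<lambda>y. (H y - Gsm M H y)\<^sup>2) +
     2 * ((1 / real M) * (\<Sum>l=1..M-1. (H (real l / real M) - Gsm M H (real l / real M))\<^sup>2))"
proof -
  define c where "c k = (1 - real k / real M) * disc_coeff M H k - disc_coeff M H k" for k
  define D where "D y = (\<Sum>k=1..M-1. c k * ebasis k y)" for y
  have Deq: "Gsm M H y - disc_interp M H y = D y" for y
    unfolding Gsm_def disc_interp_def D_def c_def sum_subtractf[symmetric] left_diff_distrib ..
  have Dint: "((\<lambda>y. (D y)\<^sup>2) has_integral (\<Sum>k=1..M-1. (c k)\<^sup>2)) {0..1}"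
    unfolding D_def by (rule int_poly_sq) auto
  have ck: "c k = disc_coeff M (\<lambda>y. Gsm M H y - H y) k" if "k \<in> {1..M-1}" for k
  proof -
    have "Gsm M H = (\<lambda>y. \<Sum>k=1..M-1. ((1 - real k / real M) * disc_coeff M H k) * ebasis k y)"
      by (rule ext) (simp only: Gsm_def)
    then have "disc_coeff M (Gsm M H) k = (1 - real k / real M) * disc_coeff M H k"
      using disc_coeff_poly[of k M "\<lambda>k. (1 - real k / real M) * disc_coeff M H k"] that by simp
    then show ?thesis unfolding c_def disc_coeff_diff by simp
  qed
  have "(\<Sum>k=1..M-1. (c k)\<^sup>2) = (\<Sum>k=1..M-1. (disc_coeff M (\<lambda>y. Gsm M H y - H y) k)\<^sup>2)"
    using ck by simp
  also have "\<dots> = (1 / real M) * (\<Sum>l=1..M-1. (Gsm M H (real l / real M) - H (real l / real M))\<^sup>2)"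
    by (rule disc_parseval[OF M])
  also have "\<dots> = (1 / real M) * (\<Sum>l=1..M-1. (H (real l / real M) - Gsm M H (real l / real M))\<^sup>2)"
    by (simp add: power2_commute)
  finally have csum: "(\<Sum>k=1..M-1. (c k)\<^sup>2) = (1 / real M) * (\<Sum>l=1..M-1. (H (real l / real M) - Gsm M H (real l / real M))\<^sup>2)" .
  have Rc: "continuous_on {0..1} (\<lambda>y. (H y - Gsm M H y)\<^sup>2)"
    by (intro continuous_intros Hc cont_Gsm)
  have Ec: "continuous_on {0..1} (\<lambda>y. (H y - disc_interp M H y)\<^sup>2)"
    by (intro continuous_intros Hc cont_interp)
  have Ri: "(\<lambda>y. (H y - Gsm M H y)\<^sup>2) integrable_on {0..1}" by (rule integrable_continuous_interval[OF Rc])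
  have Ei: "(\<lambda>y. (H y - disc_interp M H y)\<^sup>2) integrable_on {0..1}" by (rule integrable_continuous_interval[OF Ec])
  have pt: "(H y - disc_interp M H y)\<^sup>2 \<le> 2 * (H y - Gsm M H y)\<^sup>2 + 2 * (D y)\<^sup>2" for y
  proof -
    have e: "H y - disc_interp M H y = (H y - Gsm M H y) + D y" using Deq[of y] by simp
    have "(a + b)\<^sup>2 \<le> 2 * a\<^sup>2 + 2 * b\<^sup>2" for a b :: real
      using sum_squares_ge_zero[of "a - b" 0] by (simp add: power2_eq_square algebra_simps)
    then show ?thesis unfolding e .
  qed
  have "((\<lambda>y. 2 * (H y - Gsm M H y)\<^sup>2 + 2 * (D y)\<^sup>2) has_integral
      (2 * integral {0..1} (\<lambda>y. (H y - Gsm M H y)\<^sup>2) + 2 * (\<Sum>k=1..M-1. (c k)\<^sup>2))) {0..1}"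
    by (intro has_integral_add has_integral_mult_right Dint integrable_integral Ri)
  then have "integral {0..1} (\<lambda>y. (H y - disc_interp M H y)\<^sup>2) \<le>
      2 * integral {0..1} (\<lambda>y. (H y - Gsm M H y)\<^sup>2) + 2 * (\<Sum>k=1..M-1. (c k)\<^sup>2)"
    using pt Ei by (intro has_integral_le[OF integrable_integral[OF Ei]]) auto
  moreover have "(L2_norm (\<lambda>y. H y - disc_interp M H y))\<^sup>2 = integral {0..1} (\<lambda>y. (H y - disc_interp M H y)\<^sup>2)"
    unfolding L2_norm_def by (intro real_sqrt_pow2 integral_nonneg Ei) auto
  ultimately show ?thesis unfolding csum by simp
qed


lemma int_const_le:
  fixes g :: "real \<Rightarrow> real"
  assumes "continuous_on {a..b} g" "a \<le> b" "\<And>x. x \<in> {a..b} \<Longrightarrow> g x \<le> c"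
  shows "integral {a..b} g \<le> (b - a) * c"
proof -
  have "integral {a..b} g \<le> integral {a..b} (\<lambda>x. c)"
    by (rule integral_le[OF integrable_continuous_interval[OF assms(1)] integrable_const_ivl assms(3)])
  also have "\<dots> = (b - a) * c" using assms by simp
  finally show ?thesis .
qed

lemma est_global:
  assumes M: "M \<ge> 1" and fc: "continuous_on {0..1} f" and fb: "\<And>y. y \<in> {0..1} \<Longrightarrow> \<bar>f y\<bar> \<le> 2 * K"
  shows "integral {0..1} (\<lambda>y. (f y)\<^sup>2) \<le> 4 * K\<^sup>2"
    and "(1 / real M) * (\<Sum>l=1..M-1. (f (real l / real M))\<^sup>2) \<le> 4 * K\<^sup>2"
proof -
  have sq: "(f y)\<^sup>2 \<le> 4 * K\<^sup>2" if "y \<in> {0..1}" for y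
  proof -
    have "(f y)\<^sup>2 = \<bar>f y\<bar>\<^sup>2" by simp
    also have "\<dots> \<le> (2 * K)\<^sup>2" using fb[OF that] by (intro power_mono) auto
    finally show ?thesis by (simp add: power_mult_distrib)
  qed
  show "integral {0..1} (\<lambda>y. (f y)\<^sup>2) \<le> 4 * K\<^sup>2"
    using int_const_le[of 0 1 "\<lambda>y. (f y)\<^sup>2" "4 * K\<^sup>2"] sq by (simp add: continuous_intros fc)
  have Mp: "real M > 0" using M by simp
  have "(\<Sum>l=1..M-1. (f (real l / real M))\<^sup>2) \<le> (\<Sum>l=1..M-1. 4 * K\<^sup>2)"
    using Mp by (intro sum_mono sq) auto
  also have "\<dots> = (real M - 1) * (4 * K\<^sup>2)" using M by (simp add: of_nat_diff)
  also have "\<dots> \<le> real M * (4 * K\<^sup>2)" by (intro mult_right_mono) auto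
  finally show "(1 / real M) * (\<Sum>l=1..M-1. (f (real l / real M))\<^sup>2) \<le> 4 * K\<^sup>2"
    using Mp by (simp add: field_simps)
qed

lemma card_bad:
  assumes M: "M \<ge> 1" and eta: "0 < \<eta>"
  shows "real (card {l\<in>{1..M-1}. \<not> (\<eta> \<le> real l / real M \<and> real l / real M \<le> 1 - \<eta>)}) \<le> 2 * (\<eta> * real M + 1)"
proof -
  have Mp: "real M > 0" using M by simp
  define N where "N = nat \<lceil>\<eta> * real M\<rceil>"
  have N: "real N \<le> \<eta> * real M + 1"
  proof -
    have "0 \<le> \<eta> * real M" using eta Mp by simp
    then have "real N = real_of_int \<lceil>\<eta> * real M\<rceil>" unfolding N_def by simp
    also have "\<dots> \<le> \<eta> * real M + 1" by linarith
    finally show ?thesis .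
  qed
  have lt: "j < N" if "real j < \<eta> * real M" for j
  proof -
    have "int j < \<lceil>\<eta> * real M\<rceil>" using that by (simp add: less_ceiling_iff)
    then show ?thesis unfolding N_def by simp
  qed
  have sub: "{l\<in>{1..M-1}. \<not> (\<eta> \<le> real l / real M \<and> real l / real M \<le> 1 - \<eta>)} \<subseteq> {..<N} \<union> (\<lambda>j. M - j) ` {..<N}"
  proof
    fix l assume "l \<in> {l\<in>{1..M-1}. \<not> (\<eta> \<le> real l / real M \<and> real l / real M \<le> 1 - \<eta>)}"
    then have l: "l \<le> M" "real l / real M < \<eta> \<or> 1 - \<eta> < real l / real M" by auto
    show "l \<in> {..<N} \<union> (\<lambda>j. M - j) ` {..<N}"
    proof (cases "real l / real M < \<eta>")
      case True
      then have "real l < \<eta> * real M" using Mp by (simp add: field_simps)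
      then show ?thesis using lt by auto
    next
      case False
      then have "1 - \<eta> < real l / real M" using l by auto
      then have "real (M - l) < \<eta> * real M" using Mp l(1) by (simp add: field_simps of_nat_diff)
      then have "M - l < N" by (rule lt)
      moreover have "l = M - (M - l)" using l(1) by simp
      ultimately show ?thesis by blast
    qed
  qed
  have "card {l\<in>{1..M-1}. \<not> (\<eta> \<le> real l / real M \<and> real l / real M \<le> 1 - \<eta>)} \<le> card ({..<N} \<union> (\<lambda>j. M - j) ` {..<N})"
    by (rule card_mono[OF _ sub]) auto
  also have "\<dots> \<le> card {..<N} + card ((\<lambda>j. M - j) ` {..<N})" by (rule card_Un_le)
  also have "\<dots> \<le> N + N" using card_image_le[of "{..<N}" "\<lambda>j. M - j"] by simp
  finally have "real (card {l\<in>{1..M-1}. \<not> (\<eta> \<le> real l / real M \<and> real l / real M \<le> 1 - \<eta>)}) \<le> real N + real N"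
    by linarith
  moreover have "real N + real N \<le> 2 * (\<eta> * real M + 1)" using N by simp
  ultimately show ?thesis by (rule order_trans)
qed

lemma est_local:
  assumes M: "M \<ge> 1" and fc: "continuous_on {0..1} f" and fb: "\<And>y. y \<in> {0..1} \<Longrightarrow> \<bar>f y\<bar> \<le> 2 * K"
    and eta: "0 < \<eta>" "\<eta> \<le> 1/4" and B0: "0 \<le> B"
    and fB: "\<And>y. \<eta> \<le> y \<Longrightarrow> y \<le> 1 - \<eta> \<Longrightarrow> \<bar>f y\<bar> \<le> B"
  shows "integral {0..1} (\<lambda>y. (f y)\<^sup>2) \<le> 8 * K\<^sup>2 * \<eta> + B\<^sup>2"
    and "(1 / real M) * (\<Sum>l=1..M-1. (f (real l / real M))\<^sup>2) \<le> 8 * K\<^sup>2 * (\<eta> + 1 / real M) + B\<^sup>2"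
proof -
  have sq: "(f y)\<^sup>2 \<le> 4 * K\<^sup>2" if "y \<in> {0..1}" for y
  proof -
    have "(f y)\<^sup>2 = \<bar>f y\<bar>\<^sup>2" by simp
    also have "\<dots> \<le> (2 * K)\<^sup>2" using fb[OF that] by (intro power_mono) auto
    finally show ?thesis by (simp add: power_mult_distrib)
  qed
  have sqB: "(f y)\<^sup>2 \<le> B\<^sup>2" if "\<eta> \<le> y" "y \<le> 1 - \<eta>" for y
  proof -
    have "(f y)\<^sup>2 = \<bar>f y\<bar>\<^sup>2" by simp
    also have "\<dots> \<le> B\<^sup>2" using fB[OF that] by (intro power_mono) auto
    finally show ?thesis .
  qed
  define g where "g y = (f y)\<^sup>2" for y
  have gc: "continuous_on {0..1} g" unfolding g_def by (intro continuous_intros fc)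
  have gc1: "continuous_on {0..\<eta>} g" "continuous_on {\<eta>..1} g" "continuous_on {\<eta>..1-\<eta>} g" "continuous_on {1-\<eta>..1} g"
    using eta by (auto intro: continuous_on_subset[OF gc])
  have "integral {0..1} g = integral {0..\<eta>} g + integral {\<eta>..1} g"
    using Henstock_Kurzweil_Integration.integral_combine[where a=0 and c=\<eta> and b=1 and f=g] eta integrable_continuous_interval[OF gc] by auto
  also have "integral {\<eta>..1} g = integral {\<eta>..1-\<eta>} g + integral {1-\<eta>..1} g"
    using Henstock_Kurzweil_Integration.integral_combine[where a=\<eta> and c="1-\<eta>" and b=1 and f=g] eta integrable_continuous_interval[OF gc1(2)] by auto
  finally have split: "integral {0..1} g = integral {0..\<eta>} g + integral {\<eta>..1-\<eta>} g + integral {1-\<eta>..1} g" by simp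
  have i1: "integral {0..\<eta>} g \<le> (\<eta> - 0) * (4 * K\<^sup>2)"
    using eta by (intro int_const_le gc1) (auto simp: g_def intro!: sq)
  have i2: "integral {\<eta>..1-\<eta>} g \<le> (1 - \<eta> - \<eta>) * B\<^sup>2"
    using eta by (intro int_const_le gc1) (auto simp: g_def intro!: sqB)
  have i3: "integral {1-\<eta>..1} g \<le> (1 - (1 - \<eta>)) * (4 * K\<^sup>2)"
    using eta by (intro int_const_le gc1) (auto simp: g_def intro!: sq)
  have "(1 - \<eta> - \<eta>) * B\<^sup>2 \<le> 1 * B\<^sup>2" using eta by (intro mult_right_mono) auto
  then show "integral {0..1} (\<lambda>y. (f y)\<^sup>2) \<le> 8 * K\<^sup>2 * \<eta> + B\<^sup>2"
    using split i1 i2 i3 unfolding g_def[abs_def] by (simp add: algebra_simps)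
  have Mp: "real M > 0" using M by simp
  define Bad where "Bad = {l. \<not> (\<eta> \<le> real l / real M \<and> real l / real M \<le> 1 - \<eta>)}"
  have pt: "(f (real l / real M))\<^sup>2 \<le> 4 * K\<^sup>2 * (if l \<in> Bad then 1 else 0) + B\<^sup>2" if "l \<in> {1..M-1}" for l
  proof -
    have n: "real l / real M \<in> {0..1}" using that Mp by auto
    show ?thesis
    proof (cases "l \<in> Bad")
      case True
      have "(f (real l / real M))\<^sup>2 \<le> 4 * K\<^sup>2 + B\<^sup>2" using sq[OF n] zero_le_power2[of B] by linarith
      then show ?thesis using True by simp
    next
      case False then show ?thesis using sqB[of "real l / real M"] by (simp add: Bad_def)
    qed
  qed
  have "(\<Sum>l=1..M-1. (f (real l / real M))\<^sup>2) \<le> (\<Sum>l=1..M-1. 4 * K\<^sup>2 * (if l \<in> Bad then 1 else 0) + B\<^sup>2)"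
    by (intro sum_mono pt)
  also have "\<dots> = 4 * K\<^sup>2 * real (card ({1..M-1} \<inter> Bad)) + (real M - 1) * B\<^sup>2"
  proof -
    have "(\<Sum>l=1..M-1. (if l \<in> Bad then 1 else 0::real)) = real (card ({1..M-1} \<inter> Bad))"
      using sum.inter_restrict[of "{1..M-1}" "\<lambda>_. 1::real" Bad] by simp
    then show ?thesis using M by (simp add: sum.distrib sum_distrib_left[symmetric] of_nat_diff)
  qed
  also have "\<dots> \<le> 4 * K\<^sup>2 * (2 * (\<eta> * real M + 1)) + real M * B\<^sup>2"
  proof (intro add_mono mult_left_mono mult_right_mono)
    have "{1..M-1} \<inter> Bad = {l\<in>{1..M-1}. \<not> (\<eta> \<le> real l / real M \<and> real l / real M \<le> 1 - \<eta>)}"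
      unfolding Bad_def by auto
    then show "real (card ({1..M-1} \<inter> Bad)) \<le> 2 * (\<eta> * real M + 1)" using card_bad[OF M eta(1)] by simp
  qed auto
  finally have "(\<Sum>l=1..M-1. (f (real l / real M))\<^sup>2) \<le> 4 * K\<^sup>2 * (2 * (\<eta> * real M + 1)) + real M * B\<^sup>2" .
  then have "(1 / real M) * (\<Sum>l=1..M-1. (f (real l / real M))\<^sup>2) \<le> (1 / real M) * (4 * K\<^sup>2 * (2 * (\<eta> * real M + 1)) + real M * B\<^sup>2)"
    using Mp by (intro mult_left_mono) auto
  also have "\<dots> = 8 * K\<^sup>2 * (\<eta> + 1 / real M) + B\<^sup>2" using Mp by (simp add: field_simps)
  finally show "(1 / real M) * (\<Sum>l=1..M-1. (f (real l / real M))\<^sup>2) \<le> 8 * K\<^sup>2 * (\<eta> + 1 / real M) + B\<^sup>2" .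
qed


lemma gamma_facts:
  fixes \<alpha> :: real assumes "0 < \<alpha>" "\<alpha> < 1/2"
  defines "\<gamma> \<equiv> 8 * \<alpha>\<^sup>2 / (4 * \<alpha> + 1)"
  shows "0 < \<gamma>" "\<gamma> \<le> 2/3" "\<gamma> * (1 + \<alpha>) \<le> 2 * \<alpha>"
proof -
  have d: "0 < 4 * \<alpha> + 1" using assms by simp
  show "0 < \<gamma>" unfolding \<gamma>_def using assms d by simp
  have a2: "\<alpha> * \<alpha> \<le> \<alpha> * (1/2)" using assms by (intro mult_left_mono) auto
  have a2': "\<alpha> * \<alpha> \<le> \<alpha> / 2" using a2 by simp
  have s1: "8 * \<alpha>\<^sup>2 \<le> 4 * \<alpha>" using a2' unfolding power2_eq_square by linarith
  have s2: "4 * \<alpha> \<le> 2/3 * (4 * \<alpha> + 1)" using assms(1,2) by (simp add: field_simps)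
  have "8 * \<alpha>\<^sup>2 \<le> 2/3 * (4 * \<alpha> + 1)" using s1 s2 by (rule order_trans)
  then show "\<gamma> \<le> 2/3" unfolding \<gamma>_def using d by (simp add: divide_le_eq)
  have a3: "\<alpha> * \<alpha> * \<alpha> \<le> \<alpha> * (1/4)"
  proof -
    have "\<alpha> * \<alpha> \<le> 1/4" using a2' assms(2) by linarith
    then show ?thesis using assms by (metis mult.commute mult_left_mono less_imp_le)
  qed
  have "8 * \<alpha>\<^sup>2 * (1 + \<alpha>) \<le> 2 * \<alpha> * (4 * \<alpha> + 1)" using a3 by (simp add: power2_eq_square algebra_simps)
  then show "\<gamma> * (1 + \<alpha>) \<le> 2 * \<alpha>" unfolding \<gamma>_def using d by (simp add: field_simps)
qed

theorem lemma5p5: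
  fixes \<theta> \<alpha> :: real
  assumes "\<theta> > 0" and "0 < \<alpha>" and "\<alpha> < 1/2"
  shows "\<exists>C>0. \<forall>H M. H \<in> holder_space \<alpha> \<longrightarrow> H \<in> D_space \<theta> \<alpha> \<longrightarrow> M \<ge> 2 \<longrightarrow>
     (L2_norm (\<lambda>y. H y - disc_interp M H y))\<^sup>2 \<le>
       C * (max (sup_norm H) (max (holder_norm \<alpha> H) (D_norm \<theta> \<alpha> H)))\<^sup>2
         * (1 / real M) powr (8 * \<alpha>\<^sup>2 / (4 * \<alpha> + 1))"
proof (intro exI[of _ 3500] conjI allI impI)
  show "(0::real) < 3500" by simp
  fix H :: "real \<Rightarrow> real" and M :: nat
  assume Hh: "H \<in> holder_space \<alpha>" and HD: "H \<in> D_space \<theta> \<alpha>" and M2: "M \<ge> 2"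
  define \<gamma> where "\<gamma> = 8 * \<alpha>\<^sup>2 / (4 * \<alpha> + 1)"
  have g0: "0 < \<gamma>" and g23: "\<gamma> \<le> 2/3" and g3: "\<gamma> * (1 + \<alpha>) \<le> 2 * \<alpha>"
    using gamma_facts[OF assms(2,3)] unfolding \<gamma>_def by auto
  define K where "K = max (sup_norm H) (max (holder_norm \<alpha> H) (D_norm \<theta> \<alpha> H))"
  have M: "M \<ge> 1" using M2 by simp
  have Mp: "real M > 0" using M by simp
  note hf = holder_facts[OF Hh assms(2)]
  obtain Lh where Lh: "0 \<le> Lh" "Lh \<le> holder_norm \<alpha> H"
     "\<And>x z. x \<in> {0..1} \<Longrightarrow> z \<in> {0..1} \<Longrightarrow> \<bar>H x - H z\<bar> \<le> Lh * \<bar>x - z\<bar> powr (2 * \<alpha>)"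
    using hf(3) by blast
  have LK: "Lh \<le> K" using Lh(2) unfolding K_def by linarith
  have hK: "\<bar>H x\<bar> \<le> K" if "x \<in> {0..1}" for x using hf(1)[OF that] unfolding K_def by linarith
  have K0: "0 \<le> K" using hK[of 0] by simp
  define f where "f y = H y - Gsm M H y" for y
  have fc: "continuous_on {0..1} f" unfolding f_def by (intro continuous_intros hf(4) cont_Gsm)
  have fg: "\<bar>f y\<bar> \<le> 2 * K" if "y \<in> {0..1}" for y unfolding f_def using R_global[of M y H K, OF M that hK] by blast
  have dec: "(L2_norm (\<lambda>y. H y - disc_interp M H y))\<^sup>2 \<le>
     2 * integral {0..1} (\<lambda>y. (f y)\<^sup>2) + 2 * ((1 / real M) * (\<Sum>l=1..M-1. (f (real l / real M))\<^sup>2))"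
    unfolding f_def using L2_decomp[OF M hf(4)] .
  define m where "m = 1 / real M"
  have m0: "0 < m" "m \<le> 1" using M unfolding m_def by auto
  define u where "u = m powr \<gamma>"
  have u0: "0 < u" unfolding u_def using m0 by simp
  have um: "m \<le> u" unfolding u_def using powr_mono'[of \<gamma> 1 m] g23 m0 by simp
  have goal_eq: "(1 / real M) powr (8 * \<alpha>\<^sup>2 / (4 * \<alpha> + 1)) = u" unfolding u_def m_def \<gamma>_def ..
  have main: "(L2_norm (\<lambda>y. H y - disc_interp M H y))\<^sup>2 \<le> 3500 * K\<^sup>2 * u"
  proof (cases "u \<le> 1/4")
    case False
    have "(L2_norm (\<lambda>y. H y - disc_interp M H y))\<^sup>2 \<le> 2 * (4 * K\<^sup>2) + 2 * (4 * K\<^sup>2)"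
      using dec est_global[OF M fc fg] by linarith
    also have "\<dots> \<le> 3500 * K\<^sup>2 * u"
    proof -
      have "16 * K\<^sup>2 \<le> 3500 * K\<^sup>2 * (1/4)" by simp
      also have "\<dots> \<le> 3500 * K\<^sup>2 * u" using False by (intro mult_left_mono) auto
      finally show ?thesis by simp
    qed
    finally show ?thesis .
  next
    case True
    define \<eta> where "\<eta> = u"
    define \<rho> where "\<rho> = u powr (1 / (4 * \<alpha>))"
    define v where "v = m powr (\<gamma> / 2)"
    have v0: "0 \<le> v" unfolding v_def by simp
    have vu: "v\<^sup>2 = u" unfolding v_def u_def power2_eq_square powr_add[symmetric] by simp
    have rho0: "0 < \<rho>" unfolding \<rho>_def using u0 by simp
    have Meta: "1 \<le> real M * \<eta>" unfolding \<eta>_def using um Mp unfolding m_def by (simp add: field_simps)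
    have r1: "\<rho> powr (2 * \<alpha>) = v"
      unfolding \<rho>_def u_def v_def using assms(2) m0 by (simp add: powr_powr)
    have r2: "1 / (real M * \<rho>\<^sup>2) \<le> v"
    proof -
      have "\<rho>\<^sup>2 = m powr (\<gamma> / (2 * \<alpha>))" unfolding \<rho>_def u_def using m0 assms(2)
        by (simp add: powr_powr powr_realpow[symmetric] field_simps)
      then have "1 / (real M * \<rho>\<^sup>2) = m powr (1 - \<gamma> / (2 * \<alpha>))"
        unfolding m_def using Mp by (simp add: powr_diff)
      also have "\<dots> \<le> m powr (\<gamma> / 2)"
      proof (rule powr_mono')
        have "\<gamma> + \<gamma> * \<alpha> \<le> 2 * \<alpha>" using g3 by (simp add: algebra_simps)
        then show "\<gamma> / 2 \<le> 1 - \<gamma> / (2 * \<alpha>)" using assms(2) by (simp add: field_simps)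
      qed (use m0 in auto)
      finally show ?thesis unfolding v_def .
    qed
    have r3: "1 / (real M * \<eta>) \<le> v"
    proof -
      have "1 / (real M * \<eta>) = m powr (1 - \<gamma>)" unfolding \<eta>_def u_def m_def using Mp by (simp add: powr_diff)
      also have "\<dots> \<le> m powr (\<gamma> / 2)" using g23 m0 by (intro powr_mono') auto
      finally show ?thesis unfolding v_def .
    qed
    define B where "B = K * (29 * v)"
    have fB: "\<bar>f y\<bar> \<le> B" if "\<eta> \<le> y" "y \<le> 1 - \<eta>" for y
    proof -
      have "\<bar>f y\<bar> \<le> Lh * \<rho> powr (2 * \<alpha>) + 4 * Lh / (real M * \<rho>\<^sup>2) + 24 * K / (real M * \<eta>)"
        unfolding f_def using R_interior[OF M hK Lh(3) Lh(1) _ _ Meta rho0 that] assms(2) u0 \<eta>_def by auto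
      also have "\<dots> \<le> K * v + K * (4 * v) + K * (24 * v)"
      proof (intro add_mono)
        show "Lh * \<rho> powr (2 * \<alpha>) \<le> K * v" unfolding r1 using LK v0 by (intro mult_right_mono)
        have "4 * Lh / (real M * \<rho>\<^sup>2) = (4 * Lh) * (1 / (real M * \<rho>\<^sup>2))" by simp
        also have "\<dots> \<le> (4 * K) * v" using r2 LK Lh(1) by (intro mult_mono) auto
        finally show "4 * Lh / (real M * \<rho>\<^sup>2) \<le> K * (4 * v)" by simp
        have "24 * K / (real M * \<eta>) = (24 * K) * (1 / (real M * \<eta>))" by simp
        also have "\<dots> \<le> (24 * K) * v" using r3 K0 by (intro mult_left_mono) auto
        finally show "24 * K / (real M * \<eta>) \<le> K * (24 * v)" by simp
      qed
      also have "\<dots> = B" unfolding B_def by (simp add: algebra_simps)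
      finally show ?thesis .
    qed
    have B0: "0 \<le> B" unfolding B_def using K0 v0 by simp
    have B2: "B\<^sup>2 = 841 * K\<^sup>2 * u" unfolding B_def vu[symmetric] by (simp add: power_mult_distrib)
    have eta': "0 < \<eta>" "\<eta> \<le> 1/4" using u0 True unfolding \<eta>_def by auto
    have el1: "integral {0..1} (\<lambda>y. (f y)\<^sup>2) \<le> 8 * K\<^sup>2 * \<eta> + B\<^sup>2"
      by (rule est_local(1)[of M f K \<eta> B]) (use M fc fg eta' B0 fB in auto)
    have el2: "(1 / real M) * (\<Sum>l=1..M-1. (f (real l / real M))\<^sup>2) \<le> 8 * K\<^sup>2 * (\<eta> + 1 / real M) + B\<^sup>2"
      by (rule est_local(2)[of M f K \<eta> B]) (use M fc fg eta' B0 fB in auto)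
    have m_u: "1 / real M \<le> u" using um unfolding m_def .
    have "(L2_norm (\<lambda>y. H y - disc_interp M H y))\<^sup>2 \<le>
     2 * integral {0..1} (\<lambda>y. (f y)\<^sup>2) + 2 * ((1 / real M) * (\<Sum>l=1..M-1. (f (real l / real M))\<^sup>2))" by (rule dec)
    also have "\<dots> \<le> 2 * (8 * K\<^sup>2 * \<eta> + B\<^sup>2) + 2 * (8 * K\<^sup>2 * (\<eta> + 1 / real M) + B\<^sup>2)"
      by (intro add_mono mult_left_mono el1 el2) auto
    also have "\<dots> \<le> 2 * (8 * K\<^sup>2 * u + 841 * K\<^sup>2 * u) + 2 * (8 * K\<^sup>2 * (u + u) + 841 * K\<^sup>2 * u)"
      unfolding B2 \<eta>_def using m_u by (intro add_mono mult_left_mono) auto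
    also have "\<dots> \<le> 3500 * K\<^sup>2 * u" using u0 by (simp add: algebra_simps)
    finally show ?thesis .
  qed
  show "(L2_norm (\<lambda>y. H y - disc_interp M H y))\<^sup>2 \<le> 3500 * (max (sup_norm H) (max (holder_norm \<alpha> H) (D_norm \<theta> \<alpha> H)))\<^sup>2
         * (1 / real M) powr (8 * \<alpha>\<^sup>2 / (4 * \<alpha> + 1))"
    unfolding goal_eq using main unfolding K_def .
qed

end
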